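(* Let $\psi$ be a strictly convex differentiable real function and let $d_{\zeta^+}$ be the associated divergence restricted to nonzero eigenvalues (defined in the context). Then for every $A\in\mathbb{R}^{q\times p}$, $$d_{\zeta^+}(AA^\top\,\|\,I_q)=d_{\zeta^+}(A^\top A\,\|\,I_p).$$
   Context: For a strictly convex differentiable $\psi$, let $\mathrm{div}_\psi(x\|y)=\psi(x)-\psi(y)-(x-y)\psi'(y)$. For symmetric matrices $X,Y$ of the same size $m\times m$, let $\lambda_1(X)\ge\dots\ge\lambda_m(X)$ with orthonormal eigenvectors $u_1,\dots,u_m$, and $\lambda_1(Y)\ge\dots\ge\lambda_m(Y)$ with orthonormal eigenvectors $v_1,\dots,v_m$. Define $$d_{\zeta^+}(X\|Y):=\sum_{i:\lambda_i(X)\ne0}\ \sum_{j:\lambda_j(Y)\neq0}(u_i^\top v_j)^2\,\mathrm{div}_\psi\big(\lambda_i(X)\,\|\,\lambda_j(Y)\big).$$ (This is the spectral Bregman divergence induced by $\zeta(X)=\sum_i\psi(\lambda_i(X))$, restricted to nonzero eigenvalues.) *)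

theory Defs
  imports "HOL-Analysis.Analysis"
begin

definition strictly_convex :: "(real \<Rightarrow> real) \<Rightarrow> bool" where
  "strictly_convex f \<longleftrightarrow>
     (\<forall>x y t. x \<noteq> y \<and> 0 < t \<and> t < 1 \<longrightarrow>
        f (t * x + (1 - t) * y) < t * f x + (1 - t) * f y)"

definition div_psi :: "(real \<Rightarrow> real) \<Rightarrow> real \<Rightarrow> real \<Rightarrow> real" where
  "div_psi psi x y = psi x - psi y - (x - y) * deriv psi y"

definition eigdec :: "real^'n^'n \<Rightarrow> (nat \<Rightarrow> real) \<Rightarrow> (nat \<Rightarrow> real^'n) \<Rightarrow> bool" where
  "eigdec X lam u \<longleftrightarrow>
     (\<forall>i < CARD('n). X *v u i = lam i *\<^sub>R u i) \<and>
     (\<forall>i < CARD('n). \<forall>j < CARD('n). u i \<bullet> u j = (if i = j then 1 else 0)) \<and>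
     (\<forall>i j. i \<le> j \<and> j < CARD('n) \<longrightarrow> lam j \<le> lam i)"

definition d_zeta_plus ::
  "(real \<Rightarrow> real) \<Rightarrow> (nat \<Rightarrow> real) \<Rightarrow> (nat \<Rightarrow> real^'n) \<Rightarrow> (nat \<Rightarrow> real) \<Rightarrow> (nat \<Rightarrow> real^'n) \<Rightarrow> real" where
  "d_zeta_plus psi lamX u lamY v =
     (\<Sum>i\<in>{i. i < CARD('n) \<and> lamX i \<noteq> 0}. \<Sum>j\<in>{j. j < CARD('n) \<and> lamY j \<noteq> 0}.
        (u i \<bullet> v j)^2 * div_psi psi (lamX i) (lamY j))"

end

theory Submission
  imports Defs
begin

lemma adj: "(transpose M *v x) \<bullet> y = x \<bullet> ((M::real^'a^'b) *v y)"
  by (simp add: dot_lmul_matrix)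

lemma parseval:
  fixes u :: "nat \<Rightarrow> real^'n"
  assumes on: "\<forall>i < CARD('n). \<forall>j < CARD('n). u i \<bullet> u j = (if i = j then 1 else 0)"
  shows "(\<Sum>i<CARD('n). (u i \<bullet> x)^2) = x \<bullet> x"
proof -
  let ?B = "u ` {..<CARD('n)}"
  have inj: "inj_on u {..<CARD('n)}"
    by (smt (verit, ccfv_threshold) inj_onI lessThan_iff on)
  have cardB: "card ?B = CARD('n)" using inj by (simp add: card_image)
  have "pairwise orthogonal ?B"
    using on unfolding pairwise_def orthogonal_def by auto
  moreover have "0 \<notin> ?B" using on by auto (metis inner_zero_left zero_neq_one)
  ultimately have ind: "independent ?B" by (rule pairwise_orthogonal_independent)
  have "UNIV \<subseteq> span ?B"
    using card_eq_dim[of ?B UNIV] ind cardB by (simp add: dim_UNIV)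
  define s where "s = (\<Sum>i<CARD('n). (u i \<bullet> x) *\<^sub>R u i)"
  define y where "y = x - s"
  have yorth: "u k \<bullet> y = 0" if "k < CARD('n)" for k
  proof -
    have "u k \<bullet> s = (\<Sum>i<CARD('n). (u i \<bullet> x) * (u k \<bullet> u i))"
      by (simp add: inner_sum_right s_def)
    also have "\<dots> = (\<Sum>i<CARD('n). if i = k then u k \<bullet> x else 0)"
      using on that by (intro sum.cong) auto
    also have "\<dots> = u k \<bullet> x" using that by simp
    finally show ?thesis by (simp add: y_def inner_diff_right)
  qed
  have "y \<in> span ?B" using \<open>UNIV \<subseteq> span ?B\<close> by auto
  hence "orthogonal y y"
    by (rule orthogonal_to_span) (use yorth in \<open>auto simp: orthogonal_def inner_commute\<close>)
  hence "y = 0" by (simp add: orthogonal_def)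
  hence "x = s" by (simp add: y_def)
  hence "x \<bullet> x = x \<bullet> s" by simp
  also have "\<dots> = (\<Sum>i<CARD('n). (u i \<bullet> x)^2)"
    by (simp add: s_def inner_sum_right power2_eq_square inner_commute)
  finally show ?thesis by simp
qed

lemma zero_lem:
  fixes B :: "real^'p^'q" and u1 :: "nat \<Rightarrow> real^'q" and u3 :: "nat \<Rightarrow> real^'p"
  assumes e1: "eigdec (B ** transpose B) l1 u1" and e3: "eigdec (transpose B ** B) l3 u3"
    and i: "i < CARD('q)" and k: "k < CARD('p)" and ne: "l1 i \<noteq> l3 k"
  shows "(transpose B *v u1 i) \<bullet> u3 k = 0"
proof -
  let ?M = "transpose B ** B"
  let ?w = "transpose B *v u1 i"
  have "?M *v ?w = transpose B *v ((B ** transpose B) *v u1 i)"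
    by (simp only: matrix_vector_mul_assoc matrix_mul_assoc)
  also have "\<dots> = l1 i *\<^sub>R ?w" using e1 i unfolding eigdec_def
    by (simp add: matrix_vector_mult_scaleR)
  finally have w: "?M *v ?w = l1 i *\<^sub>R ?w" .
  have sym: "transpose ?M = ?M" by (simp add: matrix_transpose_mul)
  have "l1 i * (?w \<bullet> u3 k) = (?M *v ?w) \<bullet> u3 k" using w by simp
  also have "\<dots> = ?w \<bullet> (?M *v u3 k)" using adj[of ?M ?w "u3 k"] sym by simp
  also have "\<dots> = l3 k * (?w \<bullet> u3 k)" using e3 k unfolding eigdec_def by simp
  finally show ?thesis using ne by simp
qed

lemma core:
  fixes B :: "real^'p^'q" and u1 :: "nat \<Rightarrow> real^'q" and u3 :: "nat \<Rightarrow> real^'p"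
  assumes e1: "eigdec (B ** transpose B) l1 u1" and e3: "eigdec (transpose B ** B) l3 u3"
  shows "(\<Sum>i\<in>{i. i < CARD('q) \<and> l1 i \<noteq> 0}. F (l1 i)) =
    (\<Sum>i\<in>{i. i < CARD('q) \<and> l1 i \<noteq> 0}. \<Sum>k\<in>{k. k < CARD('p) \<and> l3 k \<noteq> 0}.
        ((transpose B *v u1 i) \<bullet> u3 k)^2 * (F (l1 i) / l1 i))"
proof (rule sum.cong[OF refl])
  fix i assume "i \<in> {i. i < CARD('q) \<and> l1 i \<noteq> 0}"
  hence i: "i < CARD('q)" and nz: "l1 i \<noteq> 0" by auto
  let ?w = "transpose B *v u1 i"
  have "(\<Sum>k\<in>{k. k < CARD('p) \<and> l3 k \<noteq> 0}. (?w \<bullet> u3 k)^2) = (\<Sum>k<CARD('p). (?w \<bullet> u3 k)^2)"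
  proof (rule sum.mono_neutral_left)
    show "\<forall>k\<in>{..<CARD('p)} - {k. k < CARD('p) \<and> l3 k \<noteq> 0}. (?w \<bullet> u3 k)^2 = 0"
      using zero_lem[OF e1 e3 i] nz by auto
  qed auto
  also have "\<dots> = ?w \<bullet> ?w"
    using parseval[of u3 ?w] e3 unfolding eigdec_def by (simp add: inner_commute)
  also have "\<dots> = u1 i \<bullet> (B *v ?w)" by (rule adj)
  also have "\<dots> = u1 i \<bullet> ((B ** transpose B) *v u1 i)" by (simp only: matrix_vector_mul_assoc)
  also have "\<dots> = l1 i" using e1 i unfolding eigdec_def by simp
  finally have s: "(\<Sum>k\<in>{k. k < CARD('p) \<and> l3 k \<noteq> 0}. (?w \<bullet> u3 k)^2) = l1 i" .
  show "F (l1 i) = (\<Sum>k\<in>{k. k < CARD('p) \<and> l3 k \<noteq> 0}. (?w \<bullet> u3 k)^2 * (F (l1 i) / l1 i))"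
    by (simp only: sum_distrib_right[symmetric] s) (simp add: nz)
qed

lemma ident_eig:
  assumes "eigdec (mat 1 :: real^'n^'n) lam v" "j < CARD('n)"
  shows "lam j = 1"
proof -
  have "v j = lam j *\<^sub>R v j" "v j \<bullet> v j = 1" using assms unfolding eigdec_def by auto
  then have "1 = lam j * (v j \<bullet> v j)" by (metis inner_scaleR_left)
  then show ?thesis using \<open>v j \<bullet> v j = 1\<close> by simp
qed

lemma side:
  fixes u :: "nat \<Rightarrow> real^'n"
  assumes "eigdec X lam1 u1" "eigdec (mat 1 :: real^'n^'n) lam2 v2"
  shows "d_zeta_plus psi lam1 u1 lam2 v2 =
     (\<Sum>i\<in>{i. i < CARD('n) \<and> lam1 i \<noteq> 0}. div_psi psi (lam1 i) 1)"
proof -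
  have set: "{j. j < CARD('n) \<and> lam2 j \<noteq> 0} = {..<CARD('n)}"
    using ident_eig[OF assms(2)] by auto
  show ?thesis unfolding d_zeta_plus_def set
  proof (rule sum.cong[OF refl])
    fix i assume "i \<in> {i. i < CARD('n) \<and> lam1 i \<noteq> 0}"
    hence i: "i < CARD('n)" by auto
    have "(\<Sum>j<CARD('n). (u1 i \<bullet> v2 j)^2 * div_psi psi (lam1 i) (lam2 j))
        = (\<Sum>j<CARD('n). (v2 j \<bullet> u1 i)^2) * div_psi psi (lam1 i) 1"
      by (simp add: sum_distrib_right ident_eig[OF assms(2)] inner_commute)
    also have "\<dots> = div_psi psi (lam1 i) 1"
      using parseval[of v2 "u1 i"] assms i unfolding eigdec_def by simp
    finally show "(\<Sum>j<CARD('n). (u1 i \<bullet> v2 j)^2 * div_psi psi (lam1 i) (lam2 j)) = div_psi psi (lam1 i) 1" .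
  qed
qed

theorem lemmaE2:
  fixes A :: "real^'p^'q" and psi :: "real \<Rightarrow> real"
    and lam1 lam2 lam3 lam4 :: "nat \<Rightarrow> real"
    and u1 v2 :: "nat \<Rightarrow> real^'q" and u3 v4 :: "nat \<Rightarrow> real^'p"
  assumes "strictly_convex psi"
    and "\<forall>x. psi differentiable (at x)"
    and "eigdec (A ** transpose A) lam1 u1"
    and "eigdec (mat 1 :: real^'q^'q) lam2 v2"
    and "eigdec (transpose A ** A) lam3 u3"
    and "eigdec (mat 1 :: real^'p^'p) lam4 v4"
  shows "d_zeta_plus psi lam1 u1 lam2 v2 = d_zeta_plus psi lam3 u3 lam4 v4"
proof -
  define f where "f x = div_psi psi x 1" for x
  let ?S1 = "{i. i < CARD('q) \<and> lam1 i \<noteq> 0}"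
  let ?S3 = "{k. k < CARD('p) \<and> lam3 k \<noteq> 0}"
  have L: "d_zeta_plus psi lam1 u1 lam2 v2 = (\<Sum>i\<in>?S1. f (lam1 i))"
    using side[OF assms(3,4)] by (simp add: f_def)
  have R: "d_zeta_plus psi lam3 u3 lam4 v4 = (\<Sum>k\<in>?S3. f (lam3 k))"
    using side[OF assms(5,6)] by (simp add: f_def)
  have e3': "eigdec (transpose A ** transpose (transpose A)) lam3 u3" using assms(5) by simp
  have e1': "eigdec (transpose (transpose A) ** transpose A) lam1 u1" using assms(3) by simp
  note c1 = core[OF assms(3,5), of f]
  note c2 = core[OF e3' e1', of f]
  have "(\<Sum>i\<in>?S1. \<Sum>k\<in>?S3. ((transpose A *v u1 i) \<bullet> u3 k)^2 * (f (lam1 i) / lam1 i))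
      = (\<Sum>k\<in>?S3. \<Sum>i\<in>?S1. ((transpose (transpose A) *v u3 k) \<bullet> u1 i)^2 * (f (lam3 k) / lam3 k))"
    apply (subst sum.swap)
  proof (intro sum.cong refl)
    fix k i assume k: "k \<in> ?S3" and i: "i \<in> ?S1"
    have eq: "(transpose (transpose A) *v u3 k) \<bullet> u1 i = (transpose A *v u1 i) \<bullet> u3 k"
      using adj[of A "u1 i" "u3 k"] by (simp add: inner_commute)
    show "((transpose A *v u1 i) \<bullet> u3 k)^2 * (f (lam1 i) / lam1 i) =
        ((transpose (transpose A) *v u3 k) \<bullet> u1 i)^2 * (f (lam3 k) / lam3 k)"
    proof (cases "lam1 i = lam3 k")
      case True then show ?thesis using eq by simp
    next
      case False then show ?thesis using zero_lem[OF assms(3,5), of i k] i k eq by simp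
    qed
  qed
  then show ?thesis using L R c1 c2 by simp
qed

end
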